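(* Let $Y=\{(x,y)\in\mathbb{R}^2:(x/a)^2+y^2=1\}$ with $a>1$. The map $h:Y\to Y$ is bijective if and only if $a\le\sqrt2$.
   Context: $h:Y\to Y$ sends $p\in Y$ to the unique point of the intersection of the normal line to $Y$ at $p$ with $Y\setminus\{p\}$. *)

theory Defs
  imports Complex_Main
begin

definition ellipse :: "real \<Rightarrow> (real \<times> real) set" where
  "ellipse a = {(x, y). (x / a)^2 + y^2 = 1}"

text \<open>Normal line to Y at p: the line through p in the direction of the gradient
  of F(x,y) = (x/a)^2 + y^2 - 1, i.e. of (2x/a^2, 2y).\<close>
definition normal_line :: "real \<Rightarrow> real \<times> real \<Rightarrow> (real \<times> real) set" where
  "normal_line a p = {(fst p + t * (fst p / a^2), snd p + t * snd p) | t. True}"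

definition normal_map :: "real \<Rightarrow> real \<times> real \<Rightarrow> real \<times> real" where
  "normal_map a p = (THE q. q \<in> normal_line a p \<inter> (ellipse a - {p}))"

end

theory Submission
  imports Defs
begin

definition Qf :: "real \<Rightarrow> real \<Rightarrow> real" where "Qf a u = u/a^4 + 1 - u"
definition Af :: "real \<Rightarrow> real \<Rightarrow> real" where
  "Af a u = -((2 - a^2) + u*(a - 1/a)^2)/(a^2 * Qf a u)"
definition Bf :: "real \<Rightarrow> real \<Rightarrow> real" where
  "Bf a u = -(1 - u*(1-1/a^2)^2)/Qf a u"
definition g :: "real \<Rightarrow> real \<Rightarrow> real" where "g a u = u * (Af a u)^2"

definition R :: "real \<Rightarrow> real \<Rightarrow> real" where "R b u = u + b^2 - u*b^2"
definition NA :: "real \<Rightarrow> real \<Rightarrow> real" where "NA b u = (2-b)*b + u*(b-1)^2"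
definition NB :: "real \<Rightarrow> real \<Rightarrow> real" where "NB b u = b^2 - u*(b-1)^2"

lemma R_pos: assumes "a > 1" "0 \<le> u" "u \<le> 1" shows "R (a^2) u > 0"
proof -
  have "a^2 > 1" using assms by (simp add: one_less_power)
  hence "(a^2)^2 > 1" by (metis one_less_power zero_less_numeral)
  hence "u*((a^2)^2 - 1) \<le> (a^2)^2 - 1" using assms by (simp add: mult_left_le_one_le del: power_mult)
  thus ?thesis unfolding R_def using assms by (simp add: algebra_simps del: power_mult)
qed

lemma Qf_R: assumes "a > 1" shows "Qf a u = R (a^2) u / a^4"
  using assms unfolding Qf_def R_def by (simp add: field_simps power2_eq_square power4_eq_xxxx)

lemma Qf_pos: assumes "a > 1" "0 \<le> u" "u \<le> 1" shows "Qf a u > 0"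
  using R_pos[OF assms] Qf_R[OF assms(1)] assms by simp

lemma Af_R: assumes "a > 1" "0 \<le> u" "u \<le> 1" shows "Af a u = - NA (a^2) u / R (a^2) u"
proof -
  have "(a - 1/a)^2 = (a^2-1)^2/a^2" using assms by (simp add: field_simps power2_eq_square)
  thus ?thesis using assms unfolding Af_def Qf_R[OF assms(1)] NA_def
    using R_pos[OF assms] by (simp add: field_simps power2_eq_square power4_eq_xxxx)
qed

lemma Bf_R: assumes "a > 1" "0 \<le> u" "u \<le> 1" shows "Bf a u = - NB (a^2) u / R (a^2) u"
proof -
  have "(1 - 1/a^2)^2 = (a^2-1)^2/a^4" using assms by (simp add: field_simps power2_eq_square power4_eq_xxxx)
  thus ?thesis using assms unfolding Bf_def Qf_R[OF assms(1)] NB_def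
    using R_pos[OF assms] by (simp add: field_simps power2_eq_square power4_eq_xxxx)
qed

lemma NB_pos: assumes "b > 1" "0 \<le> u" "u \<le> 1" shows "NB b u > 0"
proof -
  have "u*(b-1)^2 \<le> (b-1)^2" using assms by (simp add: mult_left_le_one_le)
  thus ?thesis unfolding NB_def using assms by (simp add: power2_eq_square algebra_simps)
qed

lemma Bf_neg: assumes "a > 1" "0 \<le> u" "u \<le> 1" shows "Bf a u < 0"
proof -
  have "a^2 > 1" using assms by (simp add: one_less_power)
  thus ?thesis using Bf_R[OF assms] NB_pos[of "a^2" u] R_pos[OF assms] assms
    by (simp add: divide_pos_pos)
qed

lemma polyid2: "u*(NA b u)^2 + (1-u)*(NB b u)^2 = (R b u)^2"
  unfolding NA_def NB_def R_def by algebra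

lemma polyid3: "- NB b u = R b u - b * NA b u - b * R b u"
  unfolding NA_def NB_def R_def by algebra

lemma polyid4a: "b * R b u - 2*(u*b + b^2 - u*b^2) = - b * NA b u"
  unfolding NA_def NB_def R_def by algebra

lemma polyid4b: "R b u - 2*(u*b + b^2 - u*b^2) = - NB b u"
  unfolding NA_def NB_def R_def by algebra

lemma nm_char:
  assumes a: "a > 1" and e: "(x/a)^2 + y^2 = 1"
  shows "(x * Af a ((x/a)^2), y * Bf a ((x/a)^2)) \<in> normal_line a (x,y) \<inter> (ellipse a - {(x,y)}) \<and>
    (\<forall>q \<in> normal_line a (x,y) \<inter> (ellipse a - {(x,y)}). q = (x * Af a ((x/a)^2), y * Bf a ((x/a)^2)))"
proof -
  define u where "u = (x/a)^2"
  define b where "b = a^2"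
  have b1: "b > 1" using a unfolding b_def by (simp add: one_less_power)
  have u0: "0 \<le> u" "u \<le> 1" using e unfolding u_def by (auto, smt (verit) zero_le_power2)
  have y2: "y^2 = 1 - u" using e u_def by simp
  have Rp: "R b u > 0" using R_pos[OF a u0] b_def by simp
  have A: "Af a u = - NA b u / R b u" using Af_R[OF a u0] b_def by simp
  have B: "Bf a u = - NB b u / R b u" using Bf_R[OF a u0] b_def by simp
  have Bn: "Bf a u < 0" using Bf_neg[OF a u0] .
  let ?q = "(x * Af a u, y * Bf a u)"
  have uniq: "q = ?q" if q: "q \<in> normal_line a (x,y) \<inter> (ellipse a - {(x,y)})" for q
  proof -
    obtain t where qt: "q = (x + t*(x/a^2), y + t*y)" using q unfolding normal_line_def by auto
    have t0: "t \<noteq> 0" using q qt by auto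
    have "((x + t*(x/a^2))/a)^2 + (y + t*y)^2 = 1" using q qt unfolding ellipse_def by auto
    moreover have "((x + t*(x/a^2))/a)^2 = u*(1+t/b)^2" unfolding u_def b_def
      by (simp add: power_mult_distrib[symmetric] algebra_simps add_divide_distrib)
    moreover have "(y + t*y)^2 = (1-u)*(1+t)^2" unfolding y2[symmetric]
      by (simp add: power_mult_distrib[symmetric] algebra_simps)
    ultimately have "u*(1+t/b)^2 + (1-u)*(1+t)^2 = 1" by simp
    hence "t*(2*(u/b + 1 - u) + t*(u/b^2 + 1 - u)) = 0"
      by (simp add: algebra_simps power2_eq_square)
    hence "2*(u/b + 1 - u) + t*(u/b^2 + 1 - u) = 0" using t0 by simp
    hence "b^2 * (2*(u/b + 1 - u) + t*(u/b^2 + 1 - u)) = 0" by simp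
    moreover have "b^2 * (2*(u/b + 1 - u) + t*(u/b^2 + 1 - u)) = 2*(u*b + b^2 - u*b^2) + t * R b u"
      using b1 unfolding R_def by (simp add: field_simps power2_eq_square)
    ultimately have tR: "t * R b u = -2*(u*b + b^2 - u*b^2)" by linarith
    have "1 + t/b = Af a u"
    proof -
      have "b * R b u + t * R b u = - b * NA b u" using tR polyid4a[of b u] by linarith
      thus ?thesis unfolding A using Rp b1 by (simp add: field_simps)
    qed
    moreover have "1 + t = Bf a u"
    proof -
      have "R b u + t * R b u = - NB b u" using tR polyid4b[of b u] by linarith
      thus ?thesis unfolding B using Rp b1 by (simp add: field_simps)
    qed
    ultimately have "x + t*(x/a^2) = x * Af a u" "y + t*y = y * Bf a u"
      unfolding b_def by (simp_all add: algebra_simps flip: \<open>1 + t/b = Af a u\<close>[unfolded b_def] \<open>1 + t = Bf a u\<close>)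
    thus ?thesis unfolding qt by simp
  qed
  have mem: "?q \<in> normal_line a (x,y) \<inter> (ellipse a - {(x,y)})"
  proof -
    define t where "t = b * (Af a u - 1)"
    have "Bf a u = 1 + t"
    proof -
      have "- NB b u / R b u = 1 + b * (- NA b u / R b u - 1)"
        using polyid3[of b u] Rp by (simp add: field_simps)
      thus ?thesis unfolding t_def A B .
    qed
    moreover have "Af a u = 1 + t/a^2" unfolding t_def b_def using a by simp
    ultimately have nl: "?q \<in> normal_line a (x,y)" unfolding normal_line_def
      by (auto simp: algebra_simps)
    have "(x * Af a u / a)^2 + (y * Bf a u)^2 = u*(Af a u)^2 + (1-u)*(Bf a u)^2"
      using y2 unfolding u_def by (simp add: power_mult_distrib power_divide)
    also have "\<dots> = 1" unfolding A B using polyid2[of u b] Rp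
      by (simp add: power_divide field_simps)
    finally have el: "?q \<in> ellipse a" unfolding ellipse_def by simp
    have ne: "?q \<noteq> (x,y)"
    proof
      assume h: "?q = (x,y)"
      show False
      proof (cases "y = 0")
        case True
        hence "u = 1" using y2 by simp
        hence "Af a u = -1" unfolding A NA_def R_def using b1 by (simp add: field_simps power2_eq_square)
        moreover have "x \<noteq> 0" using \<open>u = 1\<close> u_def by auto
        ultimately show False using h by auto
      next
        case False
        thus False using h Bn by auto
      qed
    qed
    show ?thesis using nl el ne by blast
  qed
  show ?thesis unfolding u_def[symmetric] using mem uniq by blast
qed

lemma nm_formula:
  assumes a: "a > 1" and e: "(x/a)^2 + y^2 = 1"
  shows "normal_map a (x,y) = (x * Af a ((x/a)^2), y * Bf a ((x/a)^2))"
  using nm_char[OF assms] unfolding normal_map_def by (intro the_equality) auto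

lemma nm_unique:
  assumes a: "a > 1" and p: "p \<in> ellipse a"
    and q: "q \<in> normal_line a p \<inter> (ellipse a - {p})"
  shows "normal_map a p = q"
proof -
  obtain x y where pxy: "p = (x,y)" by fastforce
  have e: "(x/a)^2 + y^2 = 1" using p pxy unfolding ellipse_def by auto
  show ?thesis using nm_char[OF a e] nm_formula[OF a e] q unfolding pxy by metis
qed

lemma nm_in:
  assumes a: "a > 1" and p: "p \<in> ellipse a"
  shows "normal_map a p \<in> ellipse a"
proof -
  obtain x y where pxy: "p = (x,y)" by fastforce
  have e: "(x/a)^2 + y^2 = 1" using p pxy unfolding ellipse_def by auto
  show ?thesis using nm_char[OF a e] nm_formula[OF a e] unfolding pxy by auto
qed


lemma not_inj:
  assumes a: "a > 1" and big: "\<not> a \<le> sqrt 2"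
  shows "\<not> inj_on (normal_map a) (ellipse a)"
proof
  assume inj: "inj_on (normal_map a) (ellipse a)"
  have "sqrt 2 < a" using big by simp
  hence "(sqrt 2)^2 < a^2" by (intro power_strict_mono) auto
  hence a2: "a^2 > 2" by simp
  define y0 where "y0 = 1/(a^2-1)"
  have y0: "0 < y0" "y0 < 1" using a2 unfolding y0_def by (auto simp: field_simps)
  have y0s: "y0^2 < 1" using y0 by (simp add: power_less_one_iff)
  define x0 where "x0 = a * sqrt (1 - y0^2)"
  have x0a: "x0/a = sqrt (1 - y0^2)" using a unfolding x0_def by simp
  have x0ne: "x0 \<noteq> 0" using a y0s unfolding x0_def by simp
  have pe: "(x0,y0) \<in> ellipse a" unfolding ellipse_def using x0a y0s by simp
  have te: "(0,1) \<in> ellipse a" "(0::real,-1::real) \<in> ellipse a" unfolding ellipse_def by auto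
  have "(0,-1) \<in> normal_line a (x0,y0)"
  proof -
    have "x0 + (- (a^2)) * (x0/a^2) = 0" using a by simp
    moreover have "y0 + (- (a^2))*y0 = -1" using a2 unfolding y0_def by (simp add: field_simps)
    ultimately show ?thesis unfolding normal_line_def by (auto intro!: exI[of _ "- (a^2)"])
  qed
  hence h1: "normal_map a (x0,y0) = (0,-1)" using y0 te
    by (intro nm_unique[OF a pe]) auto
  have "(0,-1) \<in> normal_line a (0,1)" unfolding normal_line_def
    by (auto intro!: exI[of _ "-2"])
  hence h2: "normal_map a (0,1) = (0,-1)" using te
    by (intro nm_unique[OF a te(1)]) auto
  have "(x0,y0) = (0,1)" using inj_onD[OF inj _ pe te(1)] h1 h2 by simp
  thus False using x0ne by simp
qed

lemma ident2: assumes "a > 1" "0 \<le> u" "u \<le> 1"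
  shows "u*(Af a u)^2 + (1-u)*(Bf a u)^2 = 1"
  using polyid2[of u "a^2"] R_pos[OF assms] unfolding Af_R[OF assms] Bf_R[OF assms]
  by (simp add: power_divide field_simps)

lemma g_alt: assumes "a > 1" "0 \<le> u" "u \<le> 1"
  shows "g a u = u * (NA (a^2) u / R (a^2) u)^2"
  unfolding g_def Af_R[OF assms] by (simp add: power2_eq_square)

lemma g_mono:
  assumes a: "a > 1" "a^2 \<le> 2" and u: "0 \<le> u1" "u1 < u2" "u2 \<le> 1"
  shows "g a u1 < g a u2"
proof -
  define b where "b = a^2"
  have b: "b > 1" "b \<le> 2" using a unfolding b_def by (auto simp: one_less_power)
  have R1: "R b u1 > 0" using R_pos[OF a(1), of u1] u b_def by simp
  have R2: "R b u2 > 0" using R_pos[OF a(1), of u2] u b_def by simp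
  have Rle: "R b u2 \<le> R b u1"
  proof -
    have "b^2 \<ge> 1" using b by (simp add: one_le_power)
    hence "u1*(b^2-1) \<le> u2*(b^2-1)" using u by (intro mult_right_mono) auto
    thus ?thesis unfolding R_def by (simp add: algebra_simps)
  qed
  have N1: "NA b u1 \<ge> 0" using b u unfolding NA_def by simp
  have Nle: "NA b u1 \<le> NA b u2" using u unfolding NA_def
    by (intro add_left_mono mult_right_mono) auto
  have N2: "NA b u2 > 0"
  proof -
    have "(b-1)^2 > 0" using b by simp
    hence "u2*(b-1)^2 > 0" using u by simp
    thus ?thesis using b unfolding NA_def by (smt (verit) mult_nonneg_nonneg)
  qed
  have fr: "NA b u1 / R b u1 \<le> NA b u2 / R b u2"
    using N1 Nle R2 Rle by (meson frac_le less_imp_le N2)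
  have f0: "0 \<le> NA b u1 / R b u1" using N1 R1 by simp
  have sq: "(NA b u1 / R b u1)^2 \<le> (NA b u2 / R b u2)^2" using fr f0 by (rule power_mono)
  have pos: "(NA b u2 / R b u2)^2 > 0" using N2 R2 by simp
  have "u1 * (NA b u1 / R b u1)^2 \<le> u1 * (NA b u2 / R b u2)^2"
    using sq u by (intro mult_left_mono) auto
  also have "\<dots> < u2 * (NA b u2 / R b u2)^2" using pos u by simp
  finally show ?thesis
    using g_alt[OF a(1), of u1] g_alt[OF a(1), of u2] u b_def by simp
qed

lemma g_inj:
  assumes a: "a > 1" "a^2 \<le> 2" and u: "0 \<le> u1" "u1 \<le> 1" "0 \<le> u2" "u2 \<le> 1"
    and e: "g a u1 = g a u2"
  shows "u1 = u2"
  using g_mono[OF a, of u1 u2] g_mono[OF a, of u2 u1] u e by (cases u1 u2 rule: linorder_cases) auto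


lemma Af_nonpos: assumes a: "a > 1" "a^2 \<le> 2" and u: "0 \<le> u" "u \<le> 1"
  shows "Af a u \<le> 0"
proof -
  have "NA (a^2) u \<ge> 0" using a u unfolding NA_def by simp
  thus ?thesis using Af_R[OF a(1) u] R_pos[OF a(1) u] by simp
qed

lemma Af_zero: assumes a: "a > 1" "a^2 \<le> 2" and u: "0 \<le> u" "u \<le> 1"
  and z: "Af a u = 0" shows "u = 0"
proof -
  have N: "NA (a^2) u = 0" using z Af_R[OF a(1) u] R_pos[OF a(1) u] by simp
  have "a^2 > 1" using a(1) by (simp add: one_less_power)
  hence "(a^2-1)^2 > 0" by simp
  moreover have "(2-a^2)*a^2 \<ge> 0" using a by simp
  moreover have "u*(a^2-1)^2 \<ge> 0" using u by simp
  ultimately have "u*(a^2-1)^2 = 0" using N unfolding NA_def by linarith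
  thus ?thesis using \<open>(a^2-1)^2 > 0\<close> by simp
qed

lemma inj_pos:
  assumes a: "a > 1" "a^2 \<le> 2"
  shows "inj_on (normal_map a) (ellipse a)"
proof (rule inj_onI)
  fix p1 p2 assume p1: "p1 \<in> ellipse a" and p2: "p2 \<in> ellipse a"
    and h: "normal_map a p1 = normal_map a p2"
  obtain x1 y1 where p1e: "p1 = (x1,y1)" by fastforce
  obtain x2 y2 where p2e: "p2 = (x2,y2)" by fastforce
  have e1: "(x1/a)^2 + y1^2 = 1" using p1 p1e unfolding ellipse_def by auto
  have e2: "(x2/a)^2 + y2^2 = 1" using p2 p2e unfolding ellipse_def by auto
  define u1 where "u1 = (x1/a)^2"
  define u2 where "u2 = (x2/a)^2"
  have u: "0 \<le> u1" "u1 \<le> 1" "0 \<le> u2" "u2 \<le> 1" using e1 e2 unfolding u1_def u2_def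
    by (auto, smt (verit) zero_le_power2, smt (verit) zero_le_power2)
  have hx: "x1 * Af a u1 = x2 * Af a u2" and hy: "y1 * Bf a u1 = y2 * Bf a u2"
    using h nm_formula[OF a(1) e1] nm_formula[OF a(1) e2] unfolding p1e p2e u1_def u2_def by auto
  have "g a u1 = (x1 * Af a u1 / a)^2" unfolding g_def u1_def by (simp add: power_mult_distrib power_divide)
  also have "\<dots> = (x2 * Af a u2 / a)^2" using hx by simp
  also have "\<dots> = g a u2" unfolding g_def u2_def by (simp add: power_mult_distrib power_divide)
  finally have uu: "u1 = u2" using g_inj[OF a u] by simp
  have x: "x1 = x2"
  proof (cases "Af a u1 = 0")
    case True
    hence "u1 = 0" using Af_zero[OF a u(1,2)] by simp
    hence "x1 = 0" "x2 = 0" using uu a unfolding u1_def u2_def by auto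
    thus ?thesis by simp
  next
    case False thus ?thesis using hx uu by simp
  qed
  have "Bf a u1 \<noteq> 0" using Bf_neg[OF a(1) u(1,2)] by simp
  hence "y1 = y2" using hy uu by simp
  thus "p1 = p2" using x p1e p2e by simp
qed

lemma surj_pos:
  assumes a: "a > 1" "a^2 \<le> 2" and q: "q \<in> ellipse a"
  shows "q \<in> normal_map a ` ellipse a"
proof -
  obtain X Y where qe: "q = (X,Y)" by fastforce
  have eq: "(X/a)^2 + Y^2 = 1" using q qe unfolding ellipse_def by auto
  define U where "U = (X/a)^2"
  have U: "0 \<le> U" "U \<le> 1" using eq unfolding U_def by (auto, smt (verit) zero_le_power2)
  define G where "G = (\<lambda>u. u * (NA (a^2) u / R (a^2) u)^2)"
  have G0: "G 0 = 0" unfolding G_def by simp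
  have G1: "G 1 = 1" unfolding G_def NA_def R_def by (simp add: power2_eq_square algebra_simps)
  have cont: "\<forall>x. 0 \<le> x \<and> x \<le> 1 \<longrightarrow> isCont G x"
  proof (intro allI impI)
    fix x :: real assume "0 \<le> x \<and> x \<le> 1"
    hence "R (a^2) x \<noteq> 0" using R_pos[OF a(1)] by force
    thus "isCont G x" unfolding G_def NA_def R_def by (intro continuous_intros) auto
  qed
  obtain u where u: "0 \<le> u" "u \<le> 1" "G u = U"
    using IVT[of G 0 U 1] G0 G1 U cont by auto
  have gu: "g a u = U" using g_alt[OF a(1) u(1,2)] u(3) unfolding G_def by simp
  define x where "x = (if X \<ge> 0 then -1 else 1) * a * sqrt u"
  define y where "y = (if Y \<ge> 0 then -1 else 1) * sqrt (1 - u)"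
  have xa: "(x/a)^2 = u" unfolding x_def using a u by (simp add: power_mult_distrib)
  have y2: "y^2 = 1 - u" unfolding y_def using u by (simp add: power_mult_distrib)
  have pe: "(x/a)^2 + y^2 = 1" using xa y2 by simp
  have hp: "normal_map a (x,y) = (x * Af a u, y * Bf a u)" using nm_formula[OF a(1) pe] xa by simp
  have An: "Af a u \<le> 0" using Af_nonpos[OF a u(1,2)] .
  have Bn: "Bf a u < 0" using Bf_neg[OF a(1) u(1,2)] .
  have sqx: "(x * Af a u)^2 = X^2"
  proof -
    have "(x * Af a u)^2 = a^2 * ((x/a)^2 * (Af a u)^2)" using a by (simp add: power_mult_distrib power_divide)
    also have "\<dots> = a^2 * U" using gu xa unfolding g_def by simp
    also have "\<dots> = X^2" unfolding U_def using a by (simp add: power_divide)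
    finally show ?thesis .
  qed
  have sqy: "(y * Bf a u)^2 = Y^2"
  proof -
    have "(y * Bf a u)^2 = (1-u) * (Bf a u)^2" using y2 by (simp add: power_mult_distrib)
    also have "\<dots> = 1 - g a u" using ident2[OF a(1) u(1,2)] unfolding g_def by simp
    also have "\<dots> = Y^2" using gu eq U_def by simp
    finally show ?thesis .
  qed
  have X: "x * Af a u = X"
  proof (cases "X \<ge> 0")
    case True
    have "x \<le> 0" unfolding x_def using True a u by simp
    hence "0 \<le> x * Af a u" using An by (simp add: mult_nonpos_nonpos)
    thus ?thesis using power2_eq_imp_eq[OF sqx] True by simp
  next
    case False
    have "x \<ge> 0" unfolding x_def using False a u by simp
    hence "0 \<le> -(x * Af a u)" using An by (simp add: mult_nonneg_nonpos)
    moreover have "(-(x * Af a u))^2 = (-X)^2" using sqx by simp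
    ultimately show ?thesis using power2_eq_imp_eq[of "-(x * Af a u)" "-X"] False by simp
  qed
  have Y: "y * Bf a u = Y"
  proof (cases "Y \<ge> 0")
    case True
    have "y \<le> 0" unfolding y_def using True u by simp
    hence "0 \<le> y * Bf a u" using Bn by (simp add: mult_nonpos_nonpos)
    thus ?thesis using power2_eq_imp_eq[OF sqy] True by simp
  next
    case False
    have "y \<ge> 0" unfolding y_def using False u by simp
    hence "0 \<le> -(y * Bf a u)" using Bn by (simp add: mult_nonneg_nonpos)
    moreover have "(-(y * Bf a u))^2 = (-Y)^2" using sqy by simp
    ultimately show ?thesis using power2_eq_imp_eq[of "-(y * Bf a u)" "-Y"] False by simp
  qed
  have "(x,y) \<in> ellipse a" using pe unfolding ellipse_def by simp
  moreover have "normal_map a (x,y) = q" using hp X Y qe by simp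
  ultimately show ?thesis by force
qed

theorem mainTheorem14:
  fixes a :: real
  assumes "a > 1"
  shows "bij_betw (normal_map a) (ellipse a) (ellipse a) \<longleftrightarrow> a \<le> sqrt 2"
proof
  assume "bij_betw (normal_map a) (ellipse a) (ellipse a)"
  thus "a \<le> sqrt 2" using not_inj[OF assms] unfolding bij_betw_def by blast
next
  assume "a \<le> sqrt 2"
  hence "a^2 \<le> (sqrt 2)^2" using assms by (intro power_mono) auto
  hence a2: "a^2 \<le> 2" by simp
  have "normal_map a ` ellipse a = ellipse a"
    using nm_in[OF assms] surj_pos[OF assms a2] by blast
  thus "bij_betw (normal_map a) (ellipse a) (ellipse a)"
    using inj_pos[OF assms a2] unfolding bij_betw_def by blast
qed

end
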